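(* For every positive integer $t$ and every graph $G$ with $\alpha(G)\leq 2$ which does not have $K_t$ as an odd minor, we have $\chi(G)\leq \lceil \frac32(t-1)\rceil$.
   Context: All graphs are finite and simple; $\alpha(G)$ is the independence number and $\chi(G)$ the chromatic number. A graph $G$ has $K_t$ as an odd minor if there exist vertex-disjoint trees $T_1,\dots,T_t\subseteq G$ and functions $\chi_i:V(T_i)\to\{\text{black},\text{white}\}$ such that (i) for every $i$, $\chi_i$ is a proper $2$-coloring of $T_i$, and (ii) for all $i\neq j$ there are vertices $x_i\in V(T_i)$, $x_j\in V(T_j)$ with $\{x_i,x_j\}\in E(G)$ and $\chi_i(x_i)=\chi_j(x_j)$. *)

theory Defs
  imports Complex_Main
begin

definition simple_graph :: "'a set \<Rightarrow> 'a set set \<Rightarrow> bool" where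
  "simple_graph V E \<longleftrightarrow> finite V \<and>
     (\<forall>e\<in>E. \<exists>u v. u \<noteq> v \<and> e = {u, v} \<and> u \<in> V \<and> v \<in> V)"

definition independent_set :: "'a set \<Rightarrow> 'a set set \<Rightarrow> 'a set \<Rightarrow> bool" where
  "independent_set V E S \<longleftrightarrow> S \<subseteq> V \<and> (\<forall>u\<in>S. \<forall>v\<in>S. {u, v} \<notin> E)"

definition independence_number :: "'a set \<Rightarrow> 'a set set \<Rightarrow> nat" where
  "independence_number V E = Max (card ` {S. independent_set V E S})"

definition proper_colouring :: "'a set \<Rightarrow> 'a set set \<Rightarrow> nat \<Rightarrow> ('a \<Rightarrow> nat) \<Rightarrow> bool" where
  "proper_colouring V E k c \<longleftrightarrow> (\<forall>v\<in>V. c v < k) \<and>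
     (\<forall>u\<in>V. \<forall>v\<in>V. {u, v} \<in> E \<longrightarrow> c u \<noteq> c v)"

definition chromatic_number :: "'a set \<Rightarrow> 'a set set \<Rightarrow> nat" where
  "chromatic_number V E = (LEAST k. \<exists>c. proper_colouring V E k c)"

definition connected_graph :: "'a set \<Rightarrow> 'a set set \<Rightarrow> bool" where
  "connected_graph VT ET \<longleftrightarrow> VT \<noteq> {} \<and>
     (\<forall>u\<in>VT. \<forall>v\<in>VT. (\<lambda>x y. {x, y} \<in> ET)\<^sup>*\<^sup>* u v)"

definition is_cycle :: "'a set set \<Rightarrow> 'a list \<Rightarrow> bool" where
  "is_cycle ET cs \<longleftrightarrow> length cs \<ge> 3 \<and> distinct cs \<and>
     (\<forall>i < length cs. {cs ! i, cs ! ((i + 1) mod length cs)} \<in> ET)"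

definition acyclic_graph :: "'a set set \<Rightarrow> bool" where
  "acyclic_graph ET \<longleftrightarrow> \<not> (\<exists>cs. is_cycle ET cs)"

definition is_tree :: "'a set \<Rightarrow> 'a set set \<Rightarrow> bool" where
  "is_tree VT ET \<longleftrightarrow> simple_graph VT ET \<and> connected_graph VT ET \<and> acyclic_graph ET"

text \<open>G = (V,E) has K_t as an odd minor: vertex-disjoint subtrees T_i = (VT i, ET i), i < t,
  with proper 2-colourings col i (True/False = black/white), such that any two distinct
  trees are joined by an edge of G whose ends have the same colour.\<close>
definition has_odd_clique_minor :: "'a set \<Rightarrow> 'a set set \<Rightarrow> nat \<Rightarrow> bool" where
  "has_odd_clique_minor V E t \<longleftrightarrow>
     (\<exists>(VT :: nat \<Rightarrow> 'a set) (ET :: nat \<Rightarrow> 'a set set) (col :: nat \<Rightarrow> 'a \<Rightarrow> bool).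
        (\<forall>i<t. is_tree (VT i) (ET i) \<and> VT i \<subseteq> V \<and> ET i \<subseteq> E \<and>
               (\<forall>x y. {x, y} \<in> ET i \<longrightarrow> col i x \<noteq> col i y)) \<and>
        (\<forall>i<t. \<forall>j<t. i \<noteq> j \<longrightarrow> VT i \<inter> VT j = {}) \<and>
        (\<forall>i<t. \<forall>j<t. i \<noteq> j \<longrightarrow>
           (\<exists>x\<in>VT i. \<exists>y\<in>VT j. {x, y} \<in> E \<and> col i x = col j y)))"

end

theory Submission
  imports Defs
begin


lemma dc_disj: "distinct (concat L) \<Longrightarrow> i < length L \<Longrightarrow> j < length L \<Longrightarrow> i \<noteq> j
  \<Longrightarrow> set (L!i) \<inter> set (L!j) = {}"
proof (induction L arbitrary: i j)
  case Nil then show ?case by simp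
next
  case (Cons a L)
  show ?case
  proof (cases i)
    case 0
    then obtain j' where "j = Suc j'" using Cons by (cases j) auto
    moreover have "j' < length L" using Cons \<open>j = Suc j'\<close> by simp
    ultimately have "set (L!j') \<subseteq> set (concat L)" using nth_mem by fastforce
    then show ?thesis using Cons.prems(1) 0 \<open>j = Suc j'\<close> by auto
  next
    case (Suc i')
    show ?thesis
    proof (cases j)
      case 0
      have "i' < length L" using Cons Suc by simp
      then have "set (L!i') \<subseteq> set (concat L)" using nth_mem by fastforce
      then show ?thesis using Cons.prems(1) 0 Suc by auto
    next
      case (Suc j') then show ?thesis using Cons \<open>i = Suc i'\<close> by auto
    qed
  qed
qed

lemma tree_single: "is_tree {v} {}"
proof -
  have "\<not> is_cycle {} cs" for cs
  proof
    assume "is_cycle {} cs"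
    then have "3 \<le> length cs" "\<forall>i < length cs. {cs ! i, cs ! ((i + 1) mod length cs)} \<in> {}"
      unfolding is_cycle_def by blast+
    then have L: "3 \<le> length cs" and A: "\<forall>i < length cs. {cs ! i, cs ! ((i + 1) mod length cs)} \<in> {}" by blast+
    have "0 < length cs" using L by linarith
    with A have "{cs ! 0, cs ! ((0 + 1) mod length cs)} \<in> {}" by blast
    then show False by simp
  qed
  then show ?thesis
  unfolding is_tree_def simple_graph_def connected_graph_def acyclic_graph_def
  by auto
qed

lemma tree_seag:
  assumes "a \<noteq> b" "a \<noteq> c" "b \<noteq> c"
  shows "is_tree {a,c,b} {{a,c},{c,b}}"
proof -
  let ?R = "\<lambda>x y. {x, y} \<in> {{a,c},{c,b}}"
  have ac: "?R a c" "?R c a" "?R c b" "?R b c" by (auto simp: insert_commute)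
  have conn: "?R\<^sup>*\<^sup>* u v" if "u \<in> {a,c,b}" "v \<in> {a,c,b}" for u v
  proof -
    have "?R\<^sup>*\<^sup>* u c" using that(1) ac by auto
    moreover have "?R\<^sup>*\<^sup>* c v" using that(2) ac by auto
    ultimately show ?thesis by (rule rtranclp_trans)
  qed
  have acyc: "\<not> is_cycle {{a,c},{c,b}} cs" for cs
  proof
    assume cy: "is_cycle {{a,c},{c,b}} cs"
    let ?L = "length cs"
    have L3: "?L \<ge> 3" and dist: "distinct cs" and ed: "\<And>i. i < ?L \<Longrightarrow> {cs ! i, cs ! ((i + 1) mod ?L)} \<in> {{a,c},{c,b}}"
      using cy unfolding is_cycle_def by auto
    have cin: "\<And>x y. {x,y} \<in> {{a,c},{c,b}} \<Longrightarrow> x = c \<or> y = c"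
      by (auto simp: doubleton_eq_iff)
    have m1: "(0 + 1) mod ?L = 1" and m2: "(1+1) mod ?L = 2" and m3: "(2+1) mod ?L = 3 mod ?L"
      using L3 by auto
    have "{cs!0, cs!1} \<in> {{a,c},{c,b}}" using ed[of 0] L3 m1 by (metis One_nat_def le_trans numeral_le_iff semiring_norm(69) zero_less_numeral less_le_trans)
    then have e0: "cs!0 = c \<or> cs!1 = c" by (rule cin)
    have "{cs!1, cs!2} \<in> {{a,c},{c,b}}" using ed[of 1] L3 m2 by (simp add: numeral_2_eq_2)
    then have e1: "cs!1 = c \<or> cs!2 = c" by (rule cin)
    have dn: "\<And>i j. i<?L \<Longrightarrow> j<?L \<Longrightarrow> i\<noteq>j \<Longrightarrow> cs!i \<noteq> cs!j"
      using dist by (simp add: distinct_conv_nth)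
    have ne: "cs \<noteq> []" using L3 by (cases cs) auto
    have d01: "cs!0 \<noteq> cs!1" using dn[of 0 1] L3 ne by simp
    have d12: "cs!1 \<noteq> cs!2" using dn[of 1 2] L3 by simp
    have d02: "cs!0 \<noteq> cs!2" using dn[of 0 2] L3 ne by simp
    have c1: "cs!1 = c" using e0 e1 d02 by auto
    have "{cs!2, cs!(3 mod ?L)} \<in> {{a,c},{c,b}}" using ed[of 2] L3 m3 by simp
    then have e2: "cs!2 = c \<or> cs!(3 mod ?L) = c" by (rule cin)
    have "3 mod ?L \<noteq> 1"
      using L3 by (cases "?L = 3") auto
    moreover have "3 mod ?L < ?L" using L3 by (intro mod_less_divisor) linarith
    ultimately have "cs!(3 mod ?L) \<noteq> cs!1" using dn[of "3 mod ?L" 1] L3 by simp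
    then show False using e2 c1 d12 by auto
  qed
  show ?thesis
    unfolding is_tree_def simple_graph_def connected_graph_def acyclic_graph_def
    using assms conn acyc by auto
qed



locale a2 =
  fixes V :: "'a set" and E :: "'a set set"
  assumes sg: "simple_graph V E"
  and a3: "\<And>x y z. x\<in>V \<Longrightarrow> y\<in>V \<Longrightarrow> z\<in>V \<Longrightarrow> x\<noteq>y \<Longrightarrow> y\<noteq>z \<Longrightarrow> x\<noteq>z
           \<Longrightarrow> {x,y}\<in>E \<or> {y,z}\<in>E \<or> {x,z}\<in>E"
begin

lemma finV: "finite V" using sg by (simp add: simple_graph_def)

lemma edge_ne: "{x,y} \<in> E \<Longrightarrow> x \<noteq> y"
  using sg unfolding simple_graph_def by (metis doubleton_eq_iff)

lemma edge_in: "{x,y} \<in> E \<Longrightarrow> x \<in> V \<and> y \<in> V"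
  using sg unfolding simple_graph_def by (metis doubleton_eq_iff)

definition clique where "clique S \<longleftrightarrow> S \<subseteq> V \<and> (\<forall>x\<in>S. \<forall>y\<in>S. x\<noteq>y \<longrightarrow> {x,y}\<in>E)"

definition seag where "seag a c b \<longleftrightarrow> a\<in>V \<and> b\<in>V \<and> c\<in>V \<and> a\<noteq>b \<and> a\<noteq>c \<and> b\<noteq>c
   \<and> {a,c}\<in>E \<and> {c,b}\<in>E \<and> {a,b}\<notin>E"

definition good where "good L \<longleftrightarrow>
  (\<forall>T\<in>set L. (\<exists>v. T=[v] \<and> v\<in>V) \<or> (\<exists>a c b. T=[a,c,b] \<and> seag a c b)) \<and> distinct (concat L) \<and>
  (\<forall>i<length L. \<forall>j<length L. i\<noteq>j \<longrightarrow> length (L!i) = 1 \<longrightarrow> length (L!j) = 1 \<longrightarrow> {hd (L!i), hd (L!j)} \<in> E)"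

lemma colour: "W \<subseteq> V \<Longrightarrow> \<exists>k c Q. (\<forall>v\<in>W. c v < (k::nat)) \<and> (\<forall>u\<in>W. \<forall>v\<in>W. {u,v}\<in>E \<longrightarrow> c u \<noteq> c v)
   \<and> Q \<subseteq> W \<and> clique Q \<and> 2*k \<le> card W + card Q"
proof (induction "card W" arbitrary: W rule: less_induct)
  case less
  have finW: "finite W" using less.prems finV finite_subset by blast
  show ?case
  proof (cases "W = {}")
    case True
    then show ?thesis by (intro exI[of _ 0] exI[of _ "\<lambda>_. 0"] exI[of _ "{}"]) (auto simp: clique_def)
  next
    case False
    then obtain v where vW: "v \<in> W" by blast
    show ?thesis
    proof (cases "\<exists>u\<in>W. u \<noteq> v \<and> {u,v} \<notin> E")
      case True
      then obtain u where uW: "u\<in>W" "u\<noteq>v" "{u,v}\<notin>E" by blast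
      let ?W = "W - {u,v}"
      have cW: "card ?W = card W - 2" using uW vW finW by (simp add: card_Diff_subset)
      have "card ?W < card W" using cW uW vW finW
        by (metis Diff_iff card_0_eq diff_less empty_iff zero_less_numeral neq0_conv)
      then obtain k c Q where IH: "\<forall>v\<in>?W. c v < k" "\<forall>x\<in>?W. \<forall>y\<in>?W. {x,y}\<in>E \<longrightarrow> c x \<noteq> c y"
          "Q \<subseteq> ?W" "clique Q" "2*k \<le> card ?W + card Q"
        using less.hyps[of ?W] less.prems by blast
      define c' where "c' = (\<lambda>x. if x = u \<or> x = v then k else c x)"
      have "card {u,v} \<le> card W" using uW vW finW by (intro card_mono) auto
      then have "card W \<ge> 2" using uW(2) by simp
      have p1: "\<forall>x\<in>W. c' x < k+1" using IH(1) unfolding c'_def by (simp add: less_SucI)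
      have p2: "\<forall>x\<in>W. \<forall>y\<in>W. {x,y}\<in>E \<longrightarrow> c' x \<noteq> c' y"
      proof (intro ballI impI)
        fix x y assume xy: "x\<in>W" "y\<in>W" "{x,y}\<in>E"
        have "x \<noteq> y" using xy edge_ne by blast
        have "\<not> ((x = u \<or> x = v) \<and> (y = u \<or> y = v))"
          using uW(3) \<open>x\<noteq>y\<close> xy(3) by (auto simp: insert_commute)
        moreover have "x \<notin> {u,v} \<Longrightarrow> c x < k" using IH(1) xy(1) by blast
        moreover have "y \<notin> {u,v} \<Longrightarrow> c y < k" using IH(1) xy(2) by blast
        moreover have "x \<notin> {u,v} \<Longrightarrow> y \<notin> {u,v} \<Longrightarrow> c x \<noteq> c y" using IH(2) xy by blast
        ultimately show "c' x \<noteq> c' y" unfolding c'_def by (cases "x \<in> {u,v}"; cases "y \<in> {u,v}") auto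
      qed
      show ?thesis
        using p1 p2 IH(3,4,5) cW \<open>card W \<ge> 2\<close>
        by (intro exI[of _ "k+1"] exI[of _ c'] exI[of _ Q]) auto
    next
      case False
      let ?W = "W - {v}"
      have cW: "card ?W = card W - 1" using vW finW by simp
      have "card ?W < card W" using vW finW by (meson card_Diff1_less)
      then obtain k c Q where IH: "\<forall>v\<in>?W. c v < k" "\<forall>x\<in>?W. \<forall>y\<in>?W. {x,y}\<in>E \<longrightarrow> c x \<noteq> c y"
          "Q \<subseteq> ?W" "clique Q" "2*k \<le> card ?W + card Q"
        using less.hyps[of ?W] less.prems by blast
      define c' where "c' = (\<lambda>x. if x = v then k else c x)"
      have p1: "\<forall>x\<in>W. c' x < k+1" using IH(1) unfolding c'_def by (simp add: less_SucI)
      have p2: "\<forall>x\<in>W. \<forall>y\<in>W. {x,y}\<in>E \<longrightarrow> c' x \<noteq> c' y"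
      proof (intro ballI impI)
        fix x y assume xy: "x\<in>W" "y\<in>W" "{x,y}\<in>E"
        have "x \<noteq> y" using xy edge_ne by blast
        moreover have "x \<noteq> v \<Longrightarrow> c x < k" using IH(1) xy(1) by blast
        moreover have "y \<noteq> v \<Longrightarrow> c y < k" using IH(1) xy(2) by blast
        moreover have "x \<noteq> v \<Longrightarrow> y \<noteq> v \<Longrightarrow> c x \<noteq> c y" using IH(2) xy by blast
        ultimately show "c' x \<noteq> c' y" unfolding c'_def by (cases "x = v"; cases "y = v") auto
      qed
      have vQ: "v \<notin> Q" using IH(3) by blast
      have finQ: "finite Q" using IH(3) finW finite_subset by blast
      have cl: "clique (insert v Q)" using IH(3,4) False vW less.prems
        unfolding clique_def by (auto simp: insert_commute)
      have cQ: "card (insert v Q) = card Q + 1" using vQ finQ by simp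
      have "card W \<noteq> 0" using vW finW by auto
      then have "card W \<ge> 1" by linarith
      then show ?thesis
        using p1 p2 IH(3,5) cW cl cQ vW
        by (intro exI[of _ "k+1"] exI[of _ c'] exI[of _ "insert v Q"]) auto
    qed
  qed
qed

lemma E_sym: "{x,y}\<in>E \<longleftrightarrow> {y,x}\<in>E" by (simp add: insert_commute)

lemma clique_subset: "clique A \<Longrightarrow> B \<subseteq> A \<Longrightarrow> clique B"
  unfolding clique_def by blast

lemma clique_Un: "clique A \<Longrightarrow> clique B \<Longrightarrow> (\<forall>a\<in>A. \<forall>b\<in>B. {a,b}\<in>E) \<Longrightarrow> clique (A \<union> B)"
  unfolding clique_def by (auto, metis insert_commute)

lemma base_clique:
  assumes WV: "W \<subseteq> V" and QW: "Q \<subseteq> W" and cQ: "clique Q"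
    and nos: "\<not>(\<exists>a c b. a\<in>W-Q \<and> b\<in>W-Q \<and> c\<in>W-Q \<and> seag a c b)"
  shows "\<exists>C\<subseteq>W. clique C \<and> card W + card Q \<le> 3 * card C"
proof -
  define R where "R = W - Q"
  have finW: "finite W" using WV finV finite_subset by blast
  have finR: "finite R" and finQ: "finite Q" using finW QW R_def finite_subset by auto
  have cardW: "card W = card Q + card R"
    using finW QW unfolding R_def by (metis card_Diff_subset finite_subset le_add_diff_inverse card_mono)
  have RV: "R \<subseteq> V" using WV R_def by auto
  have nos': "{a,b}\<in>E" if "a\<in>R" "b\<in>R" "c\<in>R" "a\<noteq>b" "a\<noteq>c" "b\<noteq>c" "{a,c}\<in>E" "{c,b}\<in>E" for a b c
    using nos that RV unfolding R_def seag_def by blast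
  show ?thesis
  proof (cases "clique R")
    case True
    show ?thesis
    proof (cases "card R \<le> card Q")
      case True then show ?thesis using QW cQ cardW by (intro exI[of _ Q]) auto
    next
      case False then show ?thesis using \<open>clique R\<close> cardW R_def by (intro exI[of _ R]) auto
    qed
  next
    case False
    then obtain x y where xy: "x\<in>R" "y\<in>R" "x\<noteq>y" "{x,y}\<notin>E" using RV unfolding clique_def by blast
    define L1 where "L1 = {z\<in>R. z = x \<or> {x,z}\<in>E}"
    define L2 where "L2 = R - L1"
    define Q1 where "Q1 = {q\<in>Q. \<forall>z\<in>L1. {q,z}\<in>E}"
    define Q2 where "Q2 = Q - Q1"
    have L1R: "L1 \<subseteq> R" and Q1Q: "Q1 \<subseteq> Q" unfolding L1_def Q1_def by auto
    have cL1: "clique L1"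
      unfolding clique_def
    proof (intro conjI ballI impI)
      show "L1 \<subseteq> V" using L1R RV by auto
      fix z z' assume zz: "z\<in>L1" "z'\<in>L1" "z\<noteq>z'"
      show "{z,z'}\<in>E"
      proof (cases "z = x \<or> z' = x")
        case True then show ?thesis using zz unfolding L1_def by (auto simp: insert_commute)
      next
        case False
        then have "{z,x}\<in>E" "{x,z'}\<in>E" using zz unfolding L1_def by (auto simp: insert_commute)
        then show ?thesis using nos'[of z z' x] zz False L1R xy by auto
      qed
    qed
    have cL2: "clique L2"
      unfolding clique_def
    proof (intro conjI ballI impI)
      show "L2 \<subseteq> V" using L2_def RV by auto
      fix z z' assume zz: "z\<in>L2" "z'\<in>L2" "z\<noteq>z'"
      then have "z \<noteq> x" "z' \<noteq> x" "{x,z}\<notin>E" "{x,z'}\<notin>E" "z\<in>R" "z'\<in>R"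
        unfolding L2_def L1_def using xy by auto
      then show "{z,z'}\<in>E" using a3[of x z z'] zz RV xy by auto
    qed
    have c1: "clique (Q1 \<union> L1)"
      by (rule clique_Un[OF clique_subset[OF cQ Q1Q] cL1]) (auto simp: Q1_def)
    have cross2: "{q,w}\<in>E" if q: "q\<in>Q2" and w: "w\<in>L2" for q w
    proof -
      obtain z where z: "z\<in>L1" "{q,z}\<notin>E" using q unfolding Q2_def Q1_def by auto
      have wR: "w\<in>R" "w\<notin>L1" using w L2_def by auto
      have zw: "{z,w}\<notin>E"
      proof
        assume zwE: "{z,w}\<in>E"
        show False
        proof (cases "z = x")
          case True then show False using zwE wR unfolding L1_def by auto
        next
          case False
          then have "{z,x}\<in>E" using z unfolding L1_def by (auto simp: insert_commute)
          moreover have "w \<noteq> x" using wR xy L1_def by auto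
          moreover have "w \<noteq> z" using wR z by auto
          ultimately have "{w,x}\<in>E" using nos'[of w x z] zwE wR z L1R xy False by (auto simp: insert_commute)
          then show False using wR unfolding L1_def by (auto simp: insert_commute)
        qed
      qed
      have qQ: "q\<in>Q" using q Q2_def by auto
      have "q \<noteq> z" "q \<noteq> w" using qQ z wR L1R R_def by auto
      moreover have "z \<noteq> w" using z wR by auto
      ultimately show ?thesis using a3[of q z w] z zw qQ QW WV wR L1R RV by auto
    qed
    have c2: "clique (Q2 \<union> L2)"
      by (rule clique_Un[OF clique_subset[OF cQ] cL2]) (use cross2 Q2_def in auto)
    have finL1: "finite L1" and finQ1: "finite Q1" using L1R Q1Q finR finQ finite_subset by auto
    have "card R = card L1 + card L2" unfolding L2_def using finR L1R
      by (metis card_Diff_subset card_mono finite_subset le_add_diff_inverse)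
    moreover have "card Q = card Q1 + card Q2" unfolding Q2_def using finQ Q1Q
      by (metis card_Diff_subset card_mono finite_subset le_add_diff_inverse)
    moreover have "card (Q1 \<union> L1) = card Q1 + card L1"
      using finL1 finQ1 L1R Q1Q R_def by (intro card_Un_disjoint) auto
    moreover have "card (Q2 \<union> L2) = card Q2 + card L2"
      using finR finQ L2_def Q2_def R_def by (intro card_Un_disjoint) auto
    moreover have "Q1 \<union> L1 \<subseteq> W" "Q2 \<union> L2 \<subseteq> W" using Q1Q L1R QW R_def Q2_def L2_def by auto
    ultimately have sum: "card (Q1 \<union> L1) + card (Q2 \<union> L2) + card Q = card W + card Q"
      and sub: "Q1 \<union> L1 \<subseteq> W" "Q2 \<union> L2 \<subseteq> W" using cardW by auto
    show ?thesis
    proof (cases "card (Q1 \<union> L1) \<ge> card (Q2 \<union> L2) \<and> card (Q1 \<union> L1) \<ge> card Q")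
      case True then show ?thesis using sum sub c1 by (intro exI[of _ "Q1 \<union> L1"]) auto
    next
      case F1: False
      show ?thesis
      proof (cases "card (Q2 \<union> L2) \<ge> card Q")
        case True then show ?thesis using F1 sum sub c2 by (intro exI[of _ "Q2 \<union> L2"]) auto
      next
        case False then show ?thesis using F1 sum QW cQ by (intro exI[of _ Q]) auto
      qed
    qed
  qed
qed


lemma pack: "W \<subseteq> V \<Longrightarrow> Q \<subseteq> W \<Longrightarrow> clique Q \<Longrightarrow>
   \<exists>L. good L \<and> set (concat L) \<subseteq> W \<and> card W + card Q \<le> 3 * length L"
proof (induction "card W" arbitrary: W rule: less_induct)
  case less
  have finW: "finite W" using less.prems finV finite_subset by blast
  show ?case
  proof (cases "\<exists>a c b. a\<in>W-Q \<and> b\<in>W-Q \<and> c\<in>W-Q \<and> seag a c b")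
    case True
    then obtain a c b where abc: "a\<in>W-Q" "b\<in>W-Q" "c\<in>W-Q" "seag a c b" by blast
    have d: "a\<noteq>b" "a\<noteq>c" "b\<noteq>c" using abc(4) seag_def by auto
    let ?W = "W - {a,c,b}"
    have cW: "card ?W = card W - 3" using abc d finW by (simp add: card_Diff_subset)
    have "card {a,c,b} \<le> card W" using abc finW by (intro card_mono) auto
    then have c3: "card W \<ge> 3" using d by simp
    have "card ?W < card W" using cW c3 by linarith
    moreover have "?W \<subseteq> V" "Q \<subseteq> ?W" using less.prems abc by auto
    ultimately obtain L where L: "good L" "set (concat L) \<subseteq> ?W" "card ?W + card Q \<le> 3 * length L"
      using less.hyps less.prems(3) by blast
    let ?L = "[a,c,b] # L"
    have g: "good ?L"
      unfolding good_def
    proof (intro conjI allI impI)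
      show "\<forall>T\<in>set ?L. (\<exists>v. T=[v] \<and> v\<in>V) \<or> (\<exists>a c b. T=[a,c,b] \<and> seag a c b)"
        using L(1) abc(4) unfolding good_def by auto
      show "distinct (concat ?L)" using L(1,2) d unfolding good_def by auto
      fix i j assume ij: "i < length ?L" "j < length ?L" "i \<noteq> j" "length (?L!i) = 1" "length (?L!j) = 1"
      then obtain i' j' where "i = Suc i'" "j = Suc j'" by (cases i; cases j) auto
      then show "{hd (?L!i), hd (?L!j)} \<in> E" using ij L(1) unfolding good_def by auto
    qed
    show ?thesis using g L(2,3) cW c3 abc
      by (intro exI[of _ ?L]) auto
  next
    case False
    obtain C where C: "C \<subseteq> W" "clique C" "card W + card Q \<le> 3 * card C"
      using base_clique[OF less.prems False] by blast
    have "finite C" using C(1) finW finite_subset by blast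
    then obtain xs where xs: "set xs = C" "distinct xs" using finite_distinct_list by blast
    let ?L = "map (\<lambda>v. [v]) xs"
    have cv: "concat ?L = xs" by (induction xs) auto
    have g: "good ?L"
      unfolding good_def
    proof (intro conjI allI impI)
      show "\<forall>T\<in>set ?L. (\<exists>v. T=[v] \<and> v\<in>V) \<or> (\<exists>a c b. T=[a,c,b] \<and> seag a c b)"
        using C(2) xs(1) unfolding clique_def by auto
      show "distinct (concat ?L)" using cv xs by simp
      fix i j assume ij: "i < length ?L" "j < length ?L" "i \<noteq> j" "length (?L!i) = 1" "length (?L!j) = 1"
      then have "xs!i \<noteq> xs!j" "xs!i \<in> C" "xs!j \<in> C" using xs by (auto simp: nth_eq_iff_index_eq)
      then show "{hd (?L!i), hd (?L!j)} \<in> E" using ij C(2) unfolding clique_def by auto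
    qed
    have "length ?L = card C" using xs distinct_card by fastforce
    then show ?thesis using g cv xs C by (intro exI[of _ ?L]) auto
  qed
qed

lemma shape: "good L \<Longrightarrow> i < length L \<Longrightarrow>
   (\<exists>v. L!i=[v] \<and> v\<in>V) \<or> (\<exists>a c b. L!i=[a,c,b] \<and> seag a c b)"
  unfolding good_def by (meson nth_mem)

lemma dom2: "seag a c b \<Longrightarrow> y\<in>V \<Longrightarrow> y\<noteq>a \<Longrightarrow> y\<noteq>b \<Longrightarrow> {a,y}\<in>E \<or> {b,y}\<in>E"
  using a3[of a b y] unfolding seag_def by auto


lemma minor:
  assumes g: "good L"
  shows "has_odd_clique_minor V E (length L)"
proof -
  define VT where "VT i = set (L!i)" for i
  define ET where "ET i = (if length (L!i) = 3 then {{L!i!0, L!i!1},{L!i!1, L!i!2}} else {})" for i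
  define col where "col i v = (length (L!i) \<noteq> 3 \<or> v \<noteq> L!i!1)" for i v
  have dist: "distinct (concat L)" using g good_def by auto
  have hdc: "hd (L!j) \<in> VT j \<and> hd (L!j) \<in> V \<and> col j (hd (L!j))" if "j < length L" for j
    using shape[OF g that] unfolding VT_def col_def seag_def by auto
  have P1: "is_tree (VT i) (ET i) \<and> VT i \<subseteq> V \<and> ET i \<subseteq> E \<and>
               (\<forall>x y. {x, y} \<in> ET i \<longrightarrow> col i x \<noteq> col i y)" if i: "i < length L" for i
  proof (cases "\<exists>v. L!i=[v] \<and> v\<in>V")
    case True
    then obtain v where "L!i = [v]" "v\<in>V" by blast
    then show ?thesis unfolding VT_def ET_def col_def using tree_single by auto
  next
    case False
    then obtain a c b where abc: "L!i = [a,c,b]" "seag a c b" using shape[OF g i] by blast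
    then have d: "a\<noteq>b" "a\<noteq>c" "b\<noteq>c" using seag_def by auto
    have "VT i = {a,c,b}" "ET i = {{a,c},{c,b}}" unfolding VT_def ET_def using abc by auto
    moreover have "\<forall>x y. {x, y} \<in> {{a,c},{c,b}} \<longrightarrow> col i x \<noteq> col i y"
      unfolding col_def using abc d by (auto simp: doubleton_eq_iff)
    ultimately show ?thesis using tree_seag[OF d] abc(2) unfolding seag_def by auto
  qed
  have P2: "VT i \<inter> VT j = {}" if "i < length L" "j < length L" "i \<noteq> j" for i j
    unfolding VT_def using dc_disj[OF dist that] .
  have P3: "\<exists>x\<in>VT i. \<exists>y\<in>VT j. {x, y} \<in> E \<and> col i x = col j y"
    if ij: "i < length L" "j < length L" "i \<noteq> j" for i j
  proof (cases "\<exists>a c b. L!i=[a,c,b] \<and> seag a c b")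
    case True
    then obtain a c b where abc: "L!i = [a,c,b]" "seag a c b" by blast
    let ?y = "hd (L!j)"
    have y: "?y \<in> VT j" "?y \<in> V" "col j ?y" using hdc ij by auto
    have "a \<in> VT i" "b \<in> VT i" using abc VT_def by auto
    then have "?y \<noteq> a" "?y \<noteq> b" using P2[OF ij] y by auto
    then have "{a,?y}\<in>E \<or> {b,?y}\<in>E" using dom2[OF abc(2) y(2)] by auto
    moreover have "col i a" "col i b" using abc seag_def col_def by auto
    ultimately show ?thesis using y \<open>a \<in> VT i\<close> \<open>b \<in> VT i\<close> by blast
  next
    case False
    then obtain v where v: "L!i = [v]" "v\<in>V" using shape[OF g ij(1)] by blast
    have vi: "v \<in> VT i" "col i v" using v VT_def col_def by auto
    show ?thesis
    proof (cases "\<exists>a c b. L!j=[a,c,b] \<and> seag a c b")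
      case True
      then obtain a c b where abc: "L!j = [a,c,b]" "seag a c b" by blast
      have "a \<in> VT j" "b \<in> VT j" using abc VT_def by auto
      then have "v \<noteq> a" "v \<noteq> b" using P2[OF ij] vi by auto
      then have "{a,v}\<in>E \<or> {b,v}\<in>E" using dom2[OF abc(2) v(2)] by auto
      then have "{v,a}\<in>E \<or> {v,b}\<in>E" by (auto simp: insert_commute)
      moreover have "col j a" "col j b" using abc seag_def col_def by auto
      ultimately show ?thesis using vi \<open>a \<in> VT j\<close> \<open>b \<in> VT j\<close> by blast
    next
      case False
      then obtain w where w: "L!j = [w]" "w\<in>V" using shape[OF g ij(2)] by blast
      have "\<forall>i<length L. \<forall>j<length L. i\<noteq>j \<longrightarrow> length (L!i) = 1 \<longrightarrow> length (L!j) = 1 \<longrightarrow> {hd (L!i), hd (L!j)} \<in> E"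
        using g unfolding good_def by blast
      then have "i\<noteq>j \<longrightarrow> length (L!i) = 1 \<longrightarrow> length (L!j) = 1 \<longrightarrow> {hd (L!i), hd (L!j)} \<in> E"
        using ij by blast
      then have "{hd (L!i), hd (L!j)} \<in> E" using ij v w by simp
      then show ?thesis using v w VT_def col_def by auto
    qed
  qed
  show ?thesis unfolding has_odd_clique_minor_def
    apply (rule exI[of _ VT], rule exI[of _ ET], rule exI[of _ col])
    apply (intro conjI)
      apply (intro allI impI, erule P1)
     apply (intro allI impI, erule (2) P2)
    apply (intro allI impI, erule (2) P3)
    done
qed

end

lemma odd_mono: "has_odd_clique_minor V E h \<Longrightarrow> t \<le> h \<Longrightarrow> has_odd_clique_minor V E t"
  unfolding has_odd_clique_minor_def
  apply (elim exE conjE)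
  subgoal for VT ET col
    apply (rule exI[of _ VT], rule exI[of _ ET], rule exI[of _ col])
    apply (intro conjI)
    apply (meson less_le_trans)
    apply (meson less_le_trans)
    apply (meson less_le_trans)
    done
  done

theorem proposition1p5:
  fixes V :: "'a set" and E :: "'a set set" and t :: nat
  assumes "t \<ge> 1"
    and "simple_graph V E"
    and "independence_number V E \<le> 2"
    and "\<not> has_odd_clique_minor V E t"
  shows "real (chromatic_number V E) \<le> real_of_int \<lceil>(3 / 2 :: real) * (real t - 1)\<rceil>"
proof -
  have finV: "finite V" using assms(2) simple_graph_def by auto
  have noloop: "{u} \<notin> E" for u
    using assms(2) unfolding simple_graph_def by (metis doubleton_eq_iff insert_absorb2)
  have A3: "{x,y}\<in>E \<or> {y,z}\<in>E \<or> {x,z}\<in>E"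
    if "x\<in>V" "y\<in>V" "z\<in>V" "x\<noteq>y" "y\<noteq>z" "x\<noteq>z" for x y z
  proof (rule ccontr)
    assume n: "\<not> ({x,y}\<in>E \<or> {y,z}\<in>E \<or> {x,z}\<in>E)"
    have "independent_set V E {x,y,z}"
      unfolding independent_set_def using that n noloop by (auto simp: insert_commute)
    moreover have "finite {S. independent_set V E S}"
      using finV by (rule finite_subset[rotated, OF finite_Pow_iff[THEN iffD2]]) (auto simp: independent_set_def)
    ultimately have "card {x,y,z} \<le> independence_number V E"
      unfolding independence_number_def by (intro Max_ge) auto
    moreover have "card {x,y,z} = 3" using that by auto
    ultimately show False using assms(3) by simp
  qed
  interpret a2 V E using assms(2) A3 by unfold_locales auto
  obtain k c Q where col: "\<forall>v\<in>V. c v < k" "\<forall>u\<in>V. \<forall>v\<in>V. {u,v}\<in>E \<longrightarrow> c u \<noteq> c v"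
    "Q \<subseteq> V" "clique Q" "2*k \<le> card V + card Q"
    using colour[of V] by blast
  obtain L where L: "good L" "card V + card Q \<le> 3 * length L"
    using pack[of V Q] col(3,4) by blast
  have "length L < t"
  proof (rule ccontr)
    assume "\<not> length L < t"
    then have "has_odd_clique_minor V E t" using odd_mono[OF minor[OF L(1)]] by simp
    then show False using assms(4) by simp
  qed
  then have kt: "2 * k \<le> 3 * (t - 1)" using col(5) L(2) by linarith
  have "proper_colouring V E k c" unfolding proper_colouring_def using col(1,2) by blast
  then have "chromatic_number V E \<le> k" unfolding chromatic_number_def by (intro Least_le exI)
  then have "real (chromatic_number V E) \<le> real k" by simp
  also have "\<dots> \<le> (3 / 2 :: real) * (real t - 1)"
  proof -
    have "real (2 * k) \<le> real (3 * (t - 1))" using kt by (simp only: of_nat_le_iff)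
    then show ?thesis using assms(1) by (simp add: of_nat_diff)
  qed
  also have "\<dots> \<le> real_of_int \<lceil>(3 / 2 :: real) * (real t - 1)\<rceil>" by (rule le_of_int_ceiling)
  finally show ?thesis .
qed

end
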